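(* Let $k$ be an odd integer with $k\ge 5$, let $D$ be a strong $k$-quasi-transitive digraph with $\mathrm{diam}(D)\ge k+2$, let $u,v\in V(D)$ with $d(u,v)=k+2$, and let $P$ be a shortest $(u,v)$-path in $D$. Then $D[V(P)]$ is either a semicomplete digraph or a semicomplete bipartite digraph.
   Context: All digraphs are finite, without loops or multiple arcs (opposite arcs allowed). Vertices $x,y$ are adjacent if $xy$ or $yx$ is an arc. For $k\ge 2$, $D$ is $k$-quasi-transitive if for every path $x_0x_1\ldots x_k$ of length $k$, $x_0$ and $x_k$ are adjacent. $d(x,y)$ is the length of a shortest $(x,y)$-path, $\mathrm{diam}(D)=\max_{x,y}d(x,y)$. $D[S]$ is the induced subdigraph. A semicomplete digraph: every two distinct vertices adjacent. A semicomplete bipartite digraph: there is a bipartition $(X,Y)$ of the vertex set with no arcs inside $X$ or $Y$ and every vertex of $X$ adjacent to every vertex of $Y$. *)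

theory Defs
  imports Main
begin

definition digraph :: "'a set \<Rightarrow> ('a \<times> 'a) set \<Rightarrow> bool" where
  "digraph V A \<longleftrightarrow> finite V \<and> A \<subseteq> V \<times> V \<and> (\<forall>x. (x, x) \<notin> A)"

definition adjacent :: "('a \<times> 'a) set \<Rightarrow> 'a \<Rightarrow> 'a \<Rightarrow> bool" where
  "adjacent A x y \<longleftrightarrow> (x, y) \<in> A \<or> (y, x) \<in> A"

text \<open>A path is a nonempty list of distinct vertices with consecutive arcs;
  its length is the number of arcs, i.e. length xs - 1.\<close>

definition is_path :: "('a \<times> 'a) set \<Rightarrow> 'a list \<Rightarrow> bool" where
  "is_path A xs \<longleftrightarrow> xs \<noteq> [] \<and> distinct xs \<and>
     (\<forall>i. Suc i < length xs \<longrightarrow> (xs ! i, xs ! Suc i) \<in> A)"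

definition is_path_from_to :: "('a \<times> 'a) set \<Rightarrow> 'a list \<Rightarrow> 'a \<Rightarrow> 'a \<Rightarrow> bool" where
  "is_path_from_to A xs x y \<longleftrightarrow> is_path A xs \<and> hd xs = x \<and> last xs = y"

definition k_quasi_transitive :: "nat \<Rightarrow> ('a \<times> 'a) set \<Rightarrow> bool" where
  "k_quasi_transitive k A \<longleftrightarrow>
     (\<forall>xs. is_path A xs \<and> length xs = k + 1 \<longrightarrow> adjacent A (hd xs) (last xs))"

definition strong :: "'a set \<Rightarrow> ('a \<times> 'a) set \<Rightarrow> bool" where
  "strong V A \<longleftrightarrow> (\<forall>x\<in>V. \<forall>y\<in>V. \<exists>xs. is_path_from_to A xs x y)"

text \<open>Distance: length of a shortest (x,y)-path (only meaningful when one exists).\<close>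

definition dist :: "('a \<times> 'a) set \<Rightarrow> 'a \<Rightarrow> 'a \<Rightarrow> nat" where
  "dist A x y = (LEAST n. \<exists>xs. is_path_from_to A xs x y \<and> length xs = n + 1)"

definition diam :: "'a set \<Rightarrow> ('a \<times> 'a) set \<Rightarrow> nat" where
  "diam V A = Max {dist A x y | x y. x \<in> V \<and> y \<in> V}"

definition induced_arcs :: "('a \<times> 'a) set \<Rightarrow> 'a set \<Rightarrow> ('a \<times> 'a) set" where
  "induced_arcs A S = A \<inter> (S \<times> S)"

definition semicomplete :: "'a set \<Rightarrow> ('a \<times> 'a) set \<Rightarrow> bool" where
  "semicomplete V A \<longleftrightarrow> (\<forall>x\<in>V. \<forall>y\<in>V. x \<noteq> y \<longrightarrow> adjacent A x y)"

definition semicomplete_bipartite :: "'a set \<Rightarrow> ('a \<times> 'a) set \<Rightarrow> bool" where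
  "semicomplete_bipartite V A \<longleftrightarrow>
     (\<exists>X Y. X \<union> Y = V \<and> X \<inter> Y = {} \<and> X \<noteq> {} \<and> Y \<noteq> {} \<and>
        (\<forall>x\<in>X. \<forall>x'\<in>X. (x, x') \<notin> A) \<and> (\<forall>y\<in>Y. \<forall>y'\<in>Y. (y, y') \<notin> A) \<and>
        (\<forall>x\<in>X. \<forall>y\<in>Y. adjacent A x y))"

end

theory Submission
  imports Defs
begin


lemma ex_am:
  fixes k x y :: nat
  assumes "odd k" "5 \<le> k" "x < y" "y \<le> k+2" "even (y-x)" "4 \<le> y-x" "y-x \<le> k-1"
    "\<not>(y-x=4 \<and> x \<le> 1)" "\<not>(y-x=4 \<and> k-3 \<le> x)"
  shows "\<exists>a4 m. a4 \<le> x \<and> y \<le> a4+k \<and> a4 \<le> 2 \<and> x+1 \<le> m \<and> m+2 \<le> y \<and> odd (m - a4)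
             \<and> a4 + 3 \<le> m \<and> m + 4 \<le> a4 + k"
proof -
  define d where "d = y - x"
  have y: "y = x + d" using assms(3) d_def by simp
  have d: "4 \<le> d" "d + 1 \<le> k" "even d" "\<not>(d=4 \<and> x \<le> 1)" "\<not>(d=4 \<and> k \<le> x+3)"
    using assms unfolding d_def by auto
  obtain j where j: "k = 2*j+1" using assms(1) oddE by blast
  have F1: "6 \<le> d" if "5 \<le> d" using that d(3) by presburger
  have F2: "7 \<le> k" if "6 \<le> k" using that j by presburger
  have par: "even x = even y" using d(3) y by simp
  have h1: ?thesis if "y \<le> k-1" "x \<le> 1"
  proof -
    have "5 \<le> d" using d that by auto
    then have "7 \<le> k" using F2 y that by linarith
    then show ?thesis using that y \<open>5 \<le> d\<close> by (intro exI[of _ 0] exI[of _ 3]) auto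
  qed
  have h2: ?thesis if "y \<le> k-1" "2 \<le> x" "even x"
    using that y d by (intro exI[of _ 0] exI[of _ "x+1"]) auto
  have h3: ?thesis if "y \<le> k-1" "3 \<le> x" "odd x"
  proof -
    have "x + 5 \<noteq> k" using that j by presburger
    then show ?thesis using that y d by (intro exI[of _ 0] exI[of _ "x+2"]) auto
  qed
  have h4: ?thesis if "y = k" "x = 1"
  proof -
    have "5 \<le> d" using d that by auto
    then have "7 \<le> k" using F2 y that by linarith
    then show ?thesis using that y by (intro exI[of _ 1] exI[of _ 4]) auto
  qed
  have h5: ?thesis if "y = k" "3 \<le> x"
  proof -
    have "odd x" using par that assms(1) by simp
    then show ?thesis using that y d by (intro exI[of _ 1] exI[of _ "x+1"]) auto
  qed
  have h6: ?thesis if "y = k+1"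
  proof -
    have "even x" using par that assms(1) by simp
    have "d \<noteq> 4" using d that y by auto
    then have "6 \<le> d" using F1 d by linarith
    then show ?thesis using that y d \<open>even x\<close> by (intro exI[of _ 1] exI[of _ "x+2"]) auto
  qed
  have h7: ?thesis if "y = k+2"
  proof -
    have "odd x" using par that assms(1) by simp
    have "d \<noteq> 4" using d that y by auto
    then have "6 \<le> d" using F1 d by linarith
    then show ?thesis using that y d \<open>odd x\<close> by (intro exI[of _ 2] exI[of _ "x+2"]) auto
  qed
  have "y \<le> k-1 \<or> y = k \<or> y = k+1 \<or> y = k+2" using assms by linarith
  moreover have "x \<le> 1 \<or> (2 \<le> x \<and> even x) \<or> (3 \<le> x \<and> odd x)" by presburger
  moreover have "x = 1 \<or> 3 \<le> x" if "y = k"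
  proof -
    have "odd x" using par that assms(1) by simp
    then show ?thesis by presburger
  qed
  ultimately show ?thesis using h1 h2 h3 h4 h5 h6 h7 by blast
qed

locale G =
  fixes R :: "nat \<Rightarrow> nat \<Rightarrow> bool" and k :: nat
  assumes kodd: "odd k" and k5: "5 \<le> k"
  and fwd: "\<And>i. i < k+2 \<Longrightarrow> R i (Suc i)"
  and nof: "\<And>i j. i < j \<Longrightarrow> j \<le> k+2 \<Longrightarrow> R i j \<Longrightarrow> j = Suc i"
  and kqt: "\<And>L. L \<noteq> [] \<Longrightarrow> distinct L \<Longrightarrow> set L \<subseteq> {..k+2} \<Longrightarrow> length L = k+1
              \<Longrightarrow> successively R L \<Longrightarrow> R (hd L) (last L) \<or> R (last L) (hd L)"
begin

lemma succ_upt: "b \<le> k+2 \<Longrightarrow> successively R [a..<Suc b]"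
  unfolding successively_conv_nth
proof (intro allI impI)
  fix i assume "b \<le> k+2" "Suc i < length [a..<Suc b]"
  then show "R ([a..<Suc b] ! i) ([a..<Suc b] ! Suc i)"
    using fwd[of "a+i"] by (simp del: upt_Suc)
qed

lemma backa: "x + 1 < y \<Longrightarrow> y \<le> k+2 \<Longrightarrow> R y x \<or> R x y \<Longrightarrow> R y x"
  using nof[of x y] by auto

lemma blk2:
  assumes "y \<le> b1" "b1 \<le> k+2" "a2 \<le> x" "x + 1 < y" "R b1 a2"
    "(b1 - y + 1) + (x - a2 + 1) = k+1"
  shows "R y x"
proof -
  let ?L = "[y..<Suc b1] @ [a2..<Suc x]"
  have "R (hd ?L) (last ?L) \<or> R (last ?L) (hd ?L)"
    apply (rule kqt)
    using assms by (auto simp: successively_append_iff succ_upt hd_upt last_upt simp del: upt_Suc)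
  moreover have "hd ?L = y" "last ?L = x" using assms by (auto simp: hd_upt last_upt simp del: upt_Suc)
  ultimately show ?thesis using assms by (intro backa) auto
qed

lemma blk3:
  assumes "y \<le> b1" "b1 \<le> k+2" "a2 \<le> b2" "b2 < y" "a3 \<le> x" "x < a2" "R b1 a2" "R b2 a3"
    "(b1 - y + 1) + (b2 - a2 + 1) + (x - a3 + 1) = k+1"
  shows "R y x"
proof -
  let ?L = "[y..<Suc b1] @ [a2..<Suc b2] @ [a3..<Suc x]"
  have "R (hd ?L) (last ?L) \<or> R (last ?L) (hd ?L)"
    apply (rule kqt)
    using assms by (auto simp: successively_append_iff succ_upt hd_upt last_upt simp del: upt_Suc)
  moreover have "hd ?L = y" "last ?L = x" using assms by (auto simp: hd_upt last_upt simp del: upt_Suc)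
  ultimately show ?thesis using assms by (intro backa) auto
qed

lemma blk4:
  assumes "y \<le> b1" "b1 \<le> k+2" "a2 \<le> b2" "b2 < y" "a3 \<le> b3" "b3 < a2" "a4 \<le> x" "x < a3"
    "R b1 a2" "R b2 a3" "R b3 a4"
    "(b1 - y + 1) + (b2 - a2 + 1) + (b3 - a3 + 1) + (x - a4 + 1) = k+1"
  shows "R y x"
proof -
  let ?L = "[y..<Suc b1] @ [a2..<Suc b2] @ [a3..<Suc b3] @ [a4..<Suc x]"
  have "R (hd ?L) (last ?L) \<or> R (last ?L) (hd ?L)"
    apply (rule kqt)
    using assms by (auto simp: successively_append_iff succ_upt hd_upt last_upt simp del: upt_Suc)
  moreover have "hd ?L = y" "last ?L = x" using assms by (auto simp: hd_upt last_upt simp del: upt_Suc)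
  ultimately show ?thesis using assms by (intro backa) auto
qed


lemma base: assumes "i \<le> 2" shows "R (i+k) i"
proof -
  let ?L = "[i..<Suc (i+k)]"
  have "R (hd ?L) (last ?L) \<or> R (last ?L) (hd ?L)"
    apply (rule kqt)
    using assms by (auto simp: succ_upt simp del: upt_Suc)
  moreover have "hd ?L = i" "last ?L = i+k" by (auto simp: hd_upt last_upt simp del: upt_Suc)
  ultimately show ?thesis using assms k5 by (intro backa) auto
qed

lemma L2: "R (k+2) 0"
  by (rule blk3[of _ "k+2" 2 k 0]) (use base[of 0] base[of 2] k5 in auto)

lemma L3: assumes "t \<le> k-1" shows "R (t+3) t"
  by (rule blk2[of _ "k+2" 0]) (use L2 assms k5 in auto)

lemma L4: "odd y \<Longrightarrow> 3 \<le> y \<Longrightarrow> y \<le> k+2 \<Longrightarrow> R y 0"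
proof (induction y rule: less_induct)
  case (less y)
  show ?case
  proof (cases "y = 3")
    case True then show ?thesis using L3[of 0] k5 by auto
  next
    case False
    show ?thesis
    proof (cases "y = k+2")
      case True then show ?thesis using L2 by simp
    next
      case False
      with \<open>y \<noteq> 3\<close> less.prems kodd have y: "5 \<le> y" "y \<le> k+1" by presburger+
      have ih: "R (y-2) 0" using less.IH[of "y-2"] less.prems y by auto
      show ?thesis
        by (rule blk3[of _ "k+1" 1 "y-2" 0]) (use base[of 1] ih y in auto)
    qed
  qed
qed

lemma L5: "even y \<Longrightarrow> 4 \<le> y \<Longrightarrow> y \<le> k+1 \<Longrightarrow> R y 1"
proof (induction y rule: less_induct)
  case (less y)
  show ?case
  proof (cases "y = 4")
    case True then show ?thesis using L3[of 1] k5 by auto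
  next
    case False
    with less.prems have y: "6 \<le> y" by presburger
    have ih: "R (y-2) 1" using less.IH[of "y-2"] less.prems y by auto
    show ?thesis
      by (rule blk3[of _ "k+2" 2 "y-2" 1]) (use base[of 2] ih y less.prems in auto)
  qed
qed

lemma refl: "G (\<lambda>i j. R (k+2-j) (k+2-i)) k"
proof
  show "odd k" "5 \<le> k" using kodd k5 by auto
  show "R (k+2 - Suc i) (k+2 - i)" if "i < k+2" for i
  proof -
    have "k+2-i = Suc (k+2 - Suc i)" using that by arith
    then show ?thesis using fwd[of "k+2 - Suc i"] that by simp
  qed
  show "j = Suc i" if "i < j" "j \<le> k+2" "R (k+2-j) (k+2-i)" for i j
  proof -
    have "k+2-j < k+2-i" using that by arith
    then have "k+2-i = Suc (k+2-j)" using nof[of "k+2-j" "k+2-i"] that by auto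
    then show ?thesis using that by arith
  qed
  show "R (k+2 - last L) (k+2 - hd L) \<or> R (k+2 - hd L) (k+2 - last L)"
    if "L \<noteq> []" "distinct L" "set L \<subseteq> {..k+2}" "length L = k+1"
       "successively (\<lambda>i j. R (k+2-j) (k+2-i)) L" for L
  proof -
    let ?L = "rev (map (\<lambda>i. k+2-i) L)"
    have "inj_on (\<lambda>i. k+2-i) {..k+2}" by (rule inj_onI) auto
    then have inj: "inj_on (\<lambda>i. k+2-i) (set L)" using that(3) by (rule inj_on_subset)
    have "R (hd ?L) (last ?L) \<or> R (last ?L) (hd ?L)"
      apply (rule kqt)
      using that inj by (auto simp: distinct_map successively_map)
    moreover have "hd ?L = k+2 - last L" "last ?L = k+2 - hd L"
      using that(1) by (auto simp: hd_rev last_rev hd_map last_map)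
    ultimately show ?thesis by auto
  qed
qed

lemma L6: assumes "odd y" "5 \<le> y" "y \<le> k+2" shows "R y 2"
proof -
  have a: "R (k+2) 4" using G.L4[OF refl, of "k-2"] kodd k5 by auto
  have b: "R (y-1) 1" using L5[of "y-1"] assms by auto
  show ?thesis
    by (rule blk3[of _ "k+2" 4 "y-1" 1]) (use a b assms in auto)
qed

lemma L7: assumes "x < y" "y \<le> k+2" "odd (y-x)" "3 \<le> y-x" shows "R y x"
proof -
  have r4: "R (k+2) x" if "odd (k+2-x)" "3 \<le> k+2-x" "x \<le> k+2" for x
    using G.L4[OF refl, of "k+2-x"] that by auto
  have r5: "R (k+1) x" if "even (k+2-x)" "4 \<le> k+2-x" "1 \<le> x" for x
    using G.L5[OF refl, of "k+2-x"] that by auto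
  have r6: "R k x" if "odd (k+2-x)" "5 \<le> k+2-x" for x
    using G.L6[OF refl, of "k+2-x"] that by auto
  consider "x = 0" | "x = 1" | "x = 2" | "y = k+2" | "y = k+1" | "y = k" | "3 \<le> x" "y \<le> k-1"
    using assms(2) by linarith
  then show ?thesis
  proof cases
    case 1 then show ?thesis using L4[of y] assms by auto
  next
    case 2
    then have "even y" "4 \<le> y" "y \<le> k+1" using assms kodd by presburger+
    then show ?thesis using L5[of y] 2 by auto
  next
    case 3 then show ?thesis using L6[of y] assms by auto
  next
    case 4 then show ?thesis using r4[of x] assms by auto
  next
    case 5
    then have "even (k+2-x)" "4 \<le> k+2-x" "1 \<le> x" using assms kodd by presburger+
    then show ?thesis using r5[of x] 5 by auto
  next
    case 6
    then have "odd (k+2-x)" "5 \<le> k+2-x" using assms kodd by presburger+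
    then show ?thesis using r6[of x] 6 by auto
  next
    case 7
    show ?thesis
    proof (cases "even x")
      case True
      have a: "R (k+1) (x+1)" using r5[of "x+1"] True 7 assms kodd by (auto; presburger)
      have b: "R (y-1) 1" using L5[of "y-1"] True 7 assms by (auto; presburger)
      show ?thesis
        by (rule blk3[of _ "k+1" "x+1" "y-1" 1]) (use a b 7 assms in auto)
    next
      case False
      have a: "R k (x+1)" using r6[of "x+1"] False 7 assms kodd by (auto; presburger)
      have b: "R (y-1) 0" using L4[of "y-1"] False 7 assms by (auto; presburger)
      show ?thesis
        by (rule blk3[of _ k "x+1" "y-1" 0]) (use a b 7 assms in auto)
    qed
  qed
qed


lemma L9: assumes "even p" "2 \<le> p" "p \<le> k+2" "R p 0" shows "R (k+1) 0"
proof -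
  have "p \<le> k-3 \<or> p = k-1 \<or> p = k+1" using assms kodd by presburger
  then consider "p \<le> k-3" | "p = k-1" | "p = k+1" by blast
  then show ?thesis
  proof cases
    case 1
    have a: "R (k+1) (p+1)" using L7[of "p+1" "k+1"] 1 assms kodd k5 by (auto; presburger)
    have b: "R k 2" using L7[of 2 k] kodd k5 by (auto; presburger)
    show ?thesis
      by (rule blk4[of _ "k+1" "p+1" k 2 p 0]) (use a b 1 assms in auto)
  next
    case 2
    show ?thesis
      by (rule blk3[of _ "k+1" 1 "k-1" 0]) (use base[of 1] 2 assms k5 in auto)
  next
    case 3 then show ?thesis using assms by simp
  qed
qed

lemma L10: assumes "odd p" "3 \<le> p" "p \<le> k+2" "R p 1" shows "R (k+2) 1"
proof -
  have "p \<le> k-2 \<or> p = k \<or> p = k+2" using assms kodd by presburger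
  then consider "p \<le> k-2" | "p = k" | "p = k+2" by blast
  then show ?thesis
  proof cases
    case 1
    have a: "R (k+2) (p+1)" using L7[of "p+1" "k+2"] 1 assms kodd k5 by (auto; presburger)
    have b: "R (k+1) 3" using L7[of 3 "k+1"] kodd k5 by (auto; presburger)
    show ?thesis
      by (rule blk4[of _ "k+2" "p+1" "k+1" 3 p 1]) (use a b 1 assms in auto)
  next
    case 2
    show ?thesis
      by (rule blk3[of _ "k+2" 2 k 1]) (use base[of 2] 2 assms k5 in auto)
  next
    case 3 then show ?thesis using assms by simp
  qed
qed

lemma L13: assumes "even p" "4 \<le> p" "p \<le> k" "R p 2" shows "R (p+2) 0"
proof -
  have a: "R (k+2) 4" using L7[of 4 "k+2"] kodd k5 by (auto; presburger)
  have b: "R 3 0" using L3[of 0] k5 by auto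
  show ?thesis
    by (rule blk4[of _ "k+2" 4 p 2 3 0]) (use a b assms in auto)
qed

lemma L11: assumes "R (k+1) 0" shows "R (k+2) 1"
proof -
  have "R 3 1" by (rule blk2[of _ "k+1" 0]) (use assms k5 in auto)
  then show ?thesis using L10[of 3] k5 by auto
qed

lemma L12: assumes "R (k+2) 1" shows "R (k+1) 0"
proof -
  have "R 4 2" by (rule blk2[of _ "k+2" 1]) (use assms k5 in auto)
  then have "R 6 0" using L13[of 4] k5 by auto
  then show ?thesis using L9[of 6] k5 by auto
qed

definition big where "big \<longleftrightarrow> R (k+1) 0 \<and> R (k+2) 1"

lemma LA: assumes "q \<le> 1" "q + 2 \<le> p" "p \<le> k+2" "even (p - q)" "R p q" shows big
proof (cases "q = 0")
  case True
  then have "R (k+1) 0" using L9[of p] assms by auto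
  then show ?thesis using L11 big_def by auto
next
  case False
  then have "q = 1" using assms by auto
  then have "R (k+2) 1" using L10[of p] assms by (auto; presburger)
  then show ?thesis using L12 big_def by auto
qed

lemma LB: assumes "q = 2" "q + 2 \<le> p" "p \<le> k" "even (p - q)" "R p q" shows big
proof -
  have "R (p+2) 0" using L13[of p] assms by (auto; presburger)
  then have "R (k+1) 0" using L9[of "p+2"] assms by (auto; presburger)
  then show ?thesis using L11 big_def by auto
qed

end

lemma (in G) big_refl: "G.big (\<lambda>i j. R (k+2-j) (k+2-i)) k = big"
  using G.big_def[OF refl] big_def by auto

context G begin

lemma LC: assumes "q \<le> 2 \<or> k \<le> p" "q + 2 \<le> p" "p \<le> k+2" "even (p - q)" "R p q" shows big
proof -
  have rA: "big" if "q' \<le> 1" "q' + 2 \<le> p'" "p' \<le> k+2" "even (p' - q')" "R (k+2-q') (k+2-p')" for q' p'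
    using G.LA[OF refl, of q' p'] that big_refl by auto
  have rB: "big" if "q' = 2" "q' + 2 \<le> p'" "p' \<le> k" "even (p' - q')" "R (k+2-q') (k+2-p')" for q' p'
    using G.LB[OF refl, of q' p'] that big_refl by auto
  have "q \<le> 1 \<or> (q = 2 \<and> p \<le> k) \<or> (q = 2 \<and> p = k+1) \<or> (3 \<le> q \<and> k \<le> p)"
    using assms(1-4) kodd by presburger
  then consider "q \<le> 1" | "q = 2" "p \<le> k" | "q = 2" "p = k+1" | "3 \<le> q" "k \<le> p"
    by blast
  then show ?thesis
  proof cases
    case 1 then show ?thesis using LA assms by auto
  next
    case 2 then show ?thesis using LB assms by auto
  next
    case 3 then show ?thesis using rA[of 1 k] assms kodd k5 by (auto; presburger)
  next
    case 4
    have h: "k+2-p + 2 \<le> k+2-q" "k+2-q \<le> k+2" "even (k+2-q - (k+2-p))" "k+2-(k+2-p) = p" "k+2-(k+2-q) = q"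
      "k+2-q \<le> k"
      using 4 assms(2-4) by presburger+
    show ?thesis
    proof (cases "k+2-p \<le> 1")
      case True
      have "R (k+2-(k+2-p)) (k+2-(k+2-q))" using h assms(5) by simp
      then show ?thesis by (rule rA[OF True h(1) h(2) h(3)])
    next
      case False
      then have "k+2-p = 2" using 4 by auto
      moreover have "R (k+2-(k+2-p)) (k+2-(k+2-q))" using h assms(5) by simp
      ultimately show ?thesis by (intro rB[OF _ h(1) h(6) h(3)])
    qed
  qed
qed

lemma L8: "q + 2 \<le> p \<Longrightarrow> p \<le> k+2 \<Longrightarrow> even (p - q) \<Longrightarrow> R p q \<Longrightarrow> big"
proof (induction q arbitrary: p)
  case 0 then show ?case using LC by auto
next
  case (Suc q0)
  let ?q = "Suc q0"
  show ?case
  proof (cases "?q \<le> 2 \<or> k \<le> p")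
    case True then show ?thesis using LC Suc.prems by blast
  next
    case False
    then have qp: "3 \<le> ?q" "p \<le> k-1" using Suc.prems kodd by presburger+
    have new: "R (p+1) q0"
    proof (cases "odd ?q")
      case True
      have "odd (k - (?q+1))" "3 \<le> k - (?q+1)" "?q+1 < k" using True qp Suc.prems kodd by presburger+
      then have a: "R k (?q+1)" using L7[of "?q+1" k] by auto
      have b: "R ?q 0" using L7[of 0 "?q"] True qp Suc.prems by auto
      show ?thesis
        by (rule blk4[of _ k "?q+1" p ?q ?q 0]) (use a b qp Suc.prems in auto)
    next
      case False
      have "odd (k+1 - (?q+1))" "3 \<le> k+1 - (?q+1)" "?q+1 < k+1" using False qp Suc.prems kodd by presburger+
      then have a: "R (k+1) (?q+1)" using L7[of "?q+1" "k+1"] by auto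
      have "odd (?q - 1)" "3 \<le> ?q - 1" using False qp by presburger+
      then have b: "R ?q 1" using L7[of 1 "?q"] qp Suc.prems by auto
      show ?thesis
        by (rule blk4[of _ "k+1" "?q+1" p ?q ?q 1]) (use a b qp Suc.prems in auto)
    qed
    have "q0 + 2 \<le> p+1" "p+1 \<le> k+2" "even (p+1 - q0)" using qp Suc.prems by presburger+
    then show ?thesis using Suc.IH new by blast
  qed
qed


lemma L15: assumes big "x \<le> k" shows "R (x+2) x"
proof (cases "x \<le> k-1")
  case True
  show ?thesis by (rule blk2[of _ "k+1" 0]) (use assms True k5 in \<open>auto simp: big_def\<close>)
next
  case False
  show ?thesis by (rule blk2[of _ "k+2" 1]) (use assms False k5 in \<open>auto simp: big_def\<close>)
qed

lemma L16: "big \<Longrightarrow> x < y \<Longrightarrow> y \<le> k+2 \<Longrightarrow> even (y-x) \<Longrightarrow> R y x"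
proof (induction "y - x" arbitrary: x y rule: less_induct)
  case less
  define d where "d = y - x"
  have yd: "y = x + d" using less.prems(2) d_def by simp
  have ev: "even d" using less.prems(4) d_def by simp
  have "0 < d" using less.prems(2) d_def by simp
  then have "2 \<le> d" using ev by presburger
  moreover have "d \<noteq> 3" "d \<noteq> k" "d \<noteq> k+2" using ev kodd by auto
  moreover have "d \<le> k+2" using less.prems(3) yd by simp
  ultimately have d2: "2 \<le> y - x" "y - x \<noteq> 3" "y - x \<noteq> k" "y - x \<le> k+2" "y - x \<noteq> k+2"
    unfolding d_def by auto
  have "y - x = 2 \<or> y - x = k+1 \<or> (y - x = 4 \<and> x \<le> 1) \<or> (y - x = 4 \<and> k - 3 \<le> x)
        \<or> (4 \<le> y - x \<and> y - x \<le> k - 1 \<and> \<not> (y - x = 4 \<and> x \<le> 1) \<and> \<not> (y - x = 4 \<and> k - 3 \<le> x))"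
  proof -
    show ?thesis using d2 by linarith
  qed
  then consider "y - x = 2" | "y - x = k+1" | "y - x = 4" "x \<le> 1" | "y - x = 4" "k - 3 \<le> x"
    | "4 \<le> y - x" "y - x \<le> k - 1" "\<not> (y - x = 4 \<and> x \<le> 1)" "\<not> (y - x = 4 \<and> k - 3 \<le> x)"
    by blast
  then show ?case
  proof cases
    case 1
    then have "y = x + 2" "x \<le> k" using less.prems by auto
    then show ?thesis using L15 less.prems by auto
  next
    case 2
    then have "(x = 0 \<and> y = k+1) \<or> (x = 1 \<and> y = k+2)" using less.prems by auto
    then show ?thesis using less.prems(1) big_def by auto
  next
    case 3
    have a: "R (x+1+k) (x+1)" using base[of "x+1"] 3 by auto
    have b: "R (x+2) x" using L15 less.prems 3 k5 by auto
    show ?thesis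
      by (rule blk3[of _ "x+k+1" "x+1" "x+2" x]) (use a b 3 k5 less.prems in auto)
  next
    case 4
    have a: "R (x+3) (x+3-k)" using base[of "x+3-k"] 4 less.prems by auto
    have "x+2 \<le> k" using less.prems 4 by auto
    then have b: "R (x+4) (x+2)" using L15[of "x+2"] less.prems(1) by (simp add: numeral_eq_Suc)
    show ?thesis
      by (rule blk3[of _ "x+4" "x+2" "x+3" "x+3-k"]) (use a b 4 k5 less.prems in auto)
  next
    case 5
    have "\<exists>a4 m. a4 \<le> x \<and> y \<le> a4+k \<and> a4 \<le> 2 \<and> x+1 \<le> m \<and> m+2 \<le> y \<and> odd (m - a4)
             \<and> a4 + 3 \<le> m \<and> m + 4 \<le> a4 + k"
      using ex_am[of k x y] 5 less.prems(2-4) kodd k5 by blast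
    then obtain a4 m where am: "a4 \<le> x" "y \<le> a4+k" "a4 \<le> 2" "x+1 \<le> m" "m+2 \<le> y" "odd (m - a4)"
      "a4 + 3 \<le> m" "m + 4 \<le> a4 + k" by blast
    have p1: "odd (a4+k - (m+1))" using am(6,7,8) kodd by presburger
    have p1': "3 \<le> a4+k - (m+1)" using am(8) by linarith
    have a: "R (a4+k) (m+1)" using L7[of "m+1" "a4+k"] p1 p1' am less.prems by auto
    have p2: "3 \<le> m - a4" using am by auto
    have c: "R m a4" using L7[of a4 m] p2 am less.prems by auto
    have "4 \<le> d" using 5 d_def by simp
    then have "even (d - 2)" using ev by presburger
    have e: "y - 1 - (x + 1) = d - 2" using yd \<open>4 \<le> d\<close> by simp
    have p31: "y - 1 - (x + 1) < y - x" unfolding e d_def[symmetric] using \<open>4 \<le> d\<close> by simp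
    have p32: "x+1 < y-1" using yd \<open>4 \<le> d\<close> by simp
    have p33: "y - 1 \<le> k+2" using less.prems(3) by simp
    have p34: "even (y - 1 - (x+1))" unfolding e by fact
    note p3 = p31 p32 p33 p34
    have b: "R (y-1) (x+1)" using less.hyps[OF p3(1) less.prems(1) p3(2) p3(3) p3(4)] .
    show ?thesis
      by (rule blk4[of _ "a4+k" "m+1" "y-1" "x+1" m a4]) (use a b c am less.prems in auto)
  qed
qed


lemma Lodd: assumes "i < j" "j \<le> k+2" "odd (j-i)" shows "R j i \<or> R i j"
proof (cases "j = Suc i")
  case True then show ?thesis using fwd assms by auto
next
  case False
  then have "3 \<le> j - i" using assms by presburger
  then show ?thesis using L7 assms by auto
qed

lemma Lall: assumes "i0 < j0" "j0 \<le> k+2" "even (j0-i0)" "R j0 i0 \<or> R i0 j0"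
  and "i < j" "j \<le> k+2" shows "R j i \<or> R i j"
proof -
  have "j0 \<noteq> Suc i0" using assms(3) by auto
  then have r: "R j0 i0" using assms(1-4) nof by auto
  have "i0 + 2 \<le> j0" using assms(1,3) by presburger
  then have b: big using L8[of i0 j0] assms r by blast
  show ?thesis
  proof (cases "even (j - i)")
    case True then show ?thesis using L16[OF b assms(5,6)] by auto
  next
    case False then show ?thesis using Lodd assms by auto
  qed
qed

end



lemma path_map:
  assumes "distinct P" "L \<noteq> []" "distinct L" "set L \<subseteq> {..<length P}"
    "successively (\<lambda>i j. (P!i, P!j) \<in> A) L"
  shows "is_path A (map ((!) P) L)"
proof -
  have inj: "inj_on ((!) P) (set L)" using assms(1,4) by (intro inj_on_nth) auto
  have s: "successively (\<lambda>a b. (a,b) \<in> A) (map ((!) P) L)" using assms(5) by (simp add: successively_map)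
  show ?thesis
    unfolding is_path_def using s[unfolded successively_conv_nth] assms inj by (auto simp: distinct_map)
qed

theorem theorem2p5:
  fixes V :: "'a set" and A :: "('a \<times> 'a) set" and k :: nat
    and u v :: 'a and P :: "'a list"
  assumes "digraph V A"
    and "odd k" and "k \<ge> 5"
    and "strong V A"
    and "k_quasi_transitive k A"
    and "diam V A \<ge> k + 2"
    and "u \<in> V" and "v \<in> V" and "dist A u v = k + 2"
    and "is_path_from_to A P u v" and "length P = dist A u v + 1"
  shows "semicomplete (set P) (induced_arcs A (set P)) \<or>
         semicomplete_bipartite (set P) (induced_arcs A (set P))"
proof -
  define R where "R = (\<lambda>i j. (P!i, P!j) \<in> A)"
  have lenP: "length P = k+3" using assms(9,11) by simp
  have pathP: "is_path A P" "hd P = u" "last P = v" using assms(10) unfolding is_path_from_to_def by auto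
  have distP: "distinct P" using pathP unfolding is_path_def by auto
  have fwdP: "R i (Suc i)" if "i < k+2" for i
    using pathP(1) that lenP unfolding is_path_def R_def by auto
  have noloop: "(x, x) \<notin> A" for x using assms(1) unfolding digraph_def by auto
  have GR: "G R k"
  proof
    show "odd k" "5 \<le> k" using assms(2,3) by auto
    show "R i (Suc i)" if "i < k+2" for i using fwdP that .
    show "j = Suc i" if ij: "i < j" "j \<le> k+2" "R i j" for i j
    proof (rule ccontr)
      assume ne: "j \<noteq> Suc i"
      let ?L = "[0..<Suc i] @ [j..<Suc (k+2)]"
      let ?xs = "map ((!) P) ?L"
      have s1: "successively R [0..<Suc i]" unfolding successively_conv_nth
        using ij fwdP by (auto simp del: upt_Suc)
      have s2: "successively R [j..<Suc (k+2)]" unfolding successively_conv_nth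
        using ij fwdP by (auto simp del: upt_Suc)
      have sL: "successively R ?L"
        using ij s1 s2 by (auto simp: successively_append_iff hd_upt last_upt
            simp del: upt_Suc)
      have ip: "is_path A ?xs"
        by (rule path_map) (use distP sL ij lenP in \<open>auto simp: R_def\<close>)
      have hL: "hd ?L = 0" by (simp add: hd_append hd_upt del: upt_Suc)
      have lL: "last ?L = k+2" using ij by (simp add: last_append last_upt del: upt_Suc)
      have Pne: "P \<noteq> []" using lenP by auto
      have h1: "hd ?xs = P ! (hd ?L)" by (rule hd_map) simp
      have l1: "last ?xs = P ! (last ?L)" by (rule last_map) simp
      have hx: "hd ?xs = u" using pathP(2) hL Pne h1 hd_conv_nth[OF Pne] by simp
      have lx: "last ?xs = v" using pathP(3) lL Pne lenP l1 last_conv_nth[OF Pne] by simp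
      have lenx: "length ?xs = (length ?xs - 1) + 1" by simp
      have "dist A u v \<le> length ?xs - 1"
        unfolding dist_def
        by (rule Least_le) (use ip hx lx lenx in \<open>auto simp: is_path_from_to_def\<close>)
      moreover have "length ?xs - 1 < k+2" using ij ne by auto
      ultimately show False using assms(9) by simp
    qed
    show "R (hd L) (last L) \<or> R (last L) (hd L)"
      if "L \<noteq> []" "distinct L" "set L \<subseteq> {..k+2}" "length L = k+1" "successively R L" for L
    proof -
      have ip: "is_path A (map ((!) P) L)"
        by (rule path_map) (use distP that lenP in \<open>auto simp: R_def\<close>)
      have "adjacent A (hd (map ((!) P) L)) (last (map ((!) P) L))"
        using assms(5) ip that(4) unfolding k_quasi_transitive_def by auto
      then show ?thesis using that(1) unfolding adjacent_def R_def by (simp add: hd_map last_map)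
    qed
  qed
  have setP: "set P = {P!i | i. i < k+3}" using lenP by (auto simp: set_conv_nth)
  have odd_adj: "R j i \<or> R i j" if "i < j" "j \<le> k+2" "odd (j-i)" for i j
    using G.Lodd[OF GR] that by auto
  show ?thesis
  proof (cases "\<exists>i0 j0. i0 < j0 \<and> j0 \<le> k+2 \<and> even (j0-i0) \<and> (R j0 i0 \<or> R i0 j0)")
    case True
    then obtain i0 j0 where w: "i0 < j0" "j0 \<le> k+2" "even (j0-i0)" "R j0 i0 \<or> R i0 j0" by blast
    have all: "R j i \<or> R i j" if "i < j" "j \<le> k+2" for i j
      using G.Lall[OF GR w that] .
    have "semicomplete (set P) (induced_arcs A (set P))"
      unfolding semicomplete_def
    proof (intro ballI impI)
      fix a b assume ab: "a \<in> set P" "b \<in> set P" "a \<noteq> b"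
      obtain i j where ij: "i < k+3" "j < k+3" "a = P!i" "b = P!j" using ab setP by auto
      have "i \<noteq> j" using ij ab by auto
      then have "R j i \<or> R i j" using all[of i j] all[of j i] ij by (cases "i < j") auto
      then show "adjacent (induced_arcs A (set P)) a b"
        using ab ij unfolding adjacent_def induced_arcs_def R_def by auto
    qed
    then show ?thesis ..
  next
    case False
    define X where "X = {P!i | i. i < k+3 \<and> even i}"
    define Y where "Y = {P!i | i. i < k+3 \<and> odd i}"
    have "semicomplete_bipartite (set P) (induced_arcs A (set P))"
      unfolding semicomplete_bipartite_def
    proof (intro exI conjI)
      show "X \<union> Y = set P" unfolding X_def Y_def setP by auto
      show "X \<inter> Y = {}"
      proof -
        have "P!i \<noteq> P!j" if "i < k+3" "j < k+3" "even i" "odd j" for i j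
          using nth_eq_iff_index_eq[OF distP, of i j] that lenP by auto
        then show ?thesis unfolding X_def Y_def by blast
      qed
      show "X \<noteq> {}" unfolding X_def by (auto intro!: exI[of _ 0])
      show "Y \<noteq> {}" unfolding Y_def using assms(3) by (auto intro!: exI[of _ 1])
      show "\<forall>x\<in>X. \<forall>x'\<in>X. (x, x') \<notin> induced_arcs A (set P)"
      proof (intro ballI)
        fix x x' assume "x \<in> X" "x' \<in> X"
        then obtain i j where ij: "i < k+3" "j < k+3" "even i" "even j" "x = P!i" "x' = P!j"
          unfolding X_def by auto
        show "(x, x') \<notin> induced_arcs A (set P)"
        proof
          assume "(x, x') \<in> induced_arcs A (set P)"
          then have r: "R i j" using ij unfolding induced_arcs_def R_def by auto
          consider "i = j" | "i < j" | "j < i" by linarith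
          then show False
          proof cases
            case 1 then show False using r noloop unfolding R_def by auto
          next
            case 2
            have "j \<le> k+2" "even (j - i)" using ij(1-4) 2 by presburger+
            then show False using False r 2 by blast
          next
            case 3
            have "i \<le> k+2" "even (i - j)" using ij(1-4) 3 by presburger+
            then show False using False r 3 by blast
          qed
        qed
      qed
      show "\<forall>y\<in>Y. \<forall>y'\<in>Y. (y, y') \<notin> induced_arcs A (set P)"
      proof (intro ballI)
        fix x x' assume "x \<in> Y" "x' \<in> Y"
        then obtain i j where ij: "i < k+3" "j < k+3" "odd i" "odd j" "x = P!i" "x' = P!j"
          unfolding Y_def by auto
        show "(x, x') \<notin> induced_arcs A (set P)"
        proof
          assume "(x, x') \<in> induced_arcs A (set P)"
          then have r: "R i j" using ij unfolding induced_arcs_def R_def by auto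
          consider "i = j" | "i < j" | "j < i" by linarith
          then show False
          proof cases
            case 1 then show False using r noloop unfolding R_def by auto
          next
            case 2
            have "j \<le> k+2" "even (j - i)" using ij(1-4) 2 by presburger+
            then show False using False r 2 by blast
          next
            case 3
            have "i \<le> k+2" "even (i - j)" using ij(1-4) 3 by presburger+
            then show False using False r 3 by blast
          qed
        qed
      qed
      show "\<forall>x\<in>X. \<forall>y\<in>Y. adjacent (induced_arcs A (set P)) x y"
      proof (intro ballI)
        fix x y assume "x \<in> X" "y \<in> Y"
        then obtain i j where ij: "i < k+3" "j < k+3" "even i" "odd j" "x = P!i" "y = P!j"
          unfolding X_def Y_def by auto
        have "R j i \<or> R i j"
        proof (cases "i < j")
          case True then show ?thesis using odd_adj[of i j] ij by auto
        next
          case False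
          then have "j < i" using ij by (metis linorder_neqE_nat)
          then show ?thesis using odd_adj[of j i] ij by auto
        qed
        then show "adjacent (induced_arcs A (set P)) x y"
          using ij lenP unfolding adjacent_def induced_arcs_def R_def by auto
      qed
    qed
    then show ?thesis ..
  qed
qed
end
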